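(* Consider the action of $O(2)$ on $M_2(\mathbb{R})$ by conjugation. Each nontrivial irreducible $O(2)$-invariant cone of $M_2(\mathbb{R})$ is generated by exactly one of the following matrices: (0) $\begin{pmatrix}0&0\\0&0\end{pmatrix}$; (1) $I=\begin{pmatrix}1&0\\0&1\end{pmatrix}$; (2) $E=\begin{pmatrix}0&1\\-1&0\end{pmatrix}$; (3) $e_1=\begin{pmatrix}1&0\\0&-1\end{pmatrix}$; (4) $\begin{pmatrix}a+1&0\\0&a-1\end{pmatrix}$ with $a>0$; (5) $\begin{pmatrix}a+s&1\\-1&a-s\end{pmatrix}$ with $a,s\ge0$ and $(a,s)\neq(0,0)$.
   Context: $O(2)=\{P\in M_2(\mathbb{R}):PP^t=I\}$. A cone is a subset $C\subseteq M_2(\mathbb{R})$ closed under multiplication by nonzero scalars; an $O(2)$-invariant cone is a cone closed under conjugation $X\mapsto PXP^{-1}$ by all $P\in O(2)$; an irreducible $O(2)$-invariant cone is an $O(2)$-invariant cone not properly containing any $O(2)$-invariant cone. The irreducible invariant cones partition $M_2(\mathbb{R})$, and the cone generated by a matrix $X$ is the irreducible invariant cone containing $X$ (for $X\neq0$ this is $\{\lambda PXP^{-1}:\lambda\in\mathbb{R}\setminus\{0\},P\in O(2)\}$, and for $X=0$ it is $\{0\}$). *)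

theory Defs
  imports "HOL-Analysis.Analysis"
begin

type_synonym m2 = "real^2^2"

definition mat2 :: "real \<Rightarrow> real \<Rightarrow> real \<Rightarrow> real \<Rightarrow> m2" where
  "mat2 a b c d = (\<chi> i j. if i = 1 then (if j = 1 then a else b) else (if j = 1 then c else d))"

definition O2 :: "m2 set" where
  "O2 = {P. P ** transpose P = mat 1}"

definition is_cone :: "m2 set \<Rightarrow> bool" where
  "is_cone C \<longleftrightarrow> C \<noteq> {} \<and> (\<forall>X\<in>C. \<forall>c::real. c \<noteq> 0 \<longrightarrow> c *\<^sub>R X \<in> C)"

definition O2_invariant_cone :: "m2 set \<Rightarrow> bool" where
  "O2_invariant_cone C \<longleftrightarrow> is_cone C \<and>
     (\<forall>X\<in>C. \<forall>P\<in>O2. P ** X ** matrix_inv P \<in> C)"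

definition irreducible_O2_cone :: "m2 set \<Rightarrow> bool" where
  "irreducible_O2_cone C \<longleftrightarrow> O2_invariant_cone C \<and>
     \<not> (\<exists>D. O2_invariant_cone D \<and> D \<subset> C)"

definition cone_gen :: "m2 \<Rightarrow> m2 set" where
  "cone_gen X = (if X = 0 then {0}
     else {c *\<^sub>R (P ** X ** matrix_inv P) | c P. c \<noteq> 0 \<and> P \<in> O2})"

definition normal_forms :: "m2 set" where
  "normal_forms =
     {mat2 0 0 0 0, mat2 1 0 0 1, mat2 0 1 (-1) 0, mat2 1 0 0 (-1)}
     \<union> {mat2 (a + 1) 0 0 (a - 1) | a. a > 0}
     \<union> {mat2 (a + s) 1 (-1) (a - s) | a s. a \<ge> 0 \<and> s \<ge> 0 \<and> (a, s) \<noteq> (0, 0)}"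

end

theory Submission imports Defs begin
lemma mat2_nth: "mat2 a b c d $ 1 $ 1 = a" "mat2 a b c d $ 1 $ 2 = b" "mat2 a b c d $ 2 $ 1 = c" "mat2 a b c d $ 2 $ 2 = d"
  by (simp_all add: mat2_def)
lemma m2_eqI: fixes X Y :: m2 assumes "X$1$1 = Y$1$1" "X$1$2 = Y$1$2" "X$2$1 = Y$2$1" "X$2$2 = Y$2$2" shows "X = Y"
  using assms by (simp add: vec_eq_iff forall_2)
lemma mat2_expand: "(X::m2) = mat2 (X$1$1) (X$1$2) (X$2$1) (X$2$2)"
  by (rule m2_eqI) (simp_all add: mat2_nth)
lemma mat2_eq_iff: "mat2 a b c d = mat2 a' b' c' d' \<longleftrightarrow> a=a' \<and> b=b' \<and> c=c' \<and> d=d'"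
  by (metis mat2_nth)
lemma mat2_mult: "mat2 a b c d ** mat2 e f g h = mat2 (a*e+b*g) (a*f+b*h) (c*e+d*g) (c*f+d*h)"
  by (rule m2_eqI) (simp_all add: mat2_nth matrix_matrix_mult_def sum_2)
lemma mat2_transpose: "transpose (mat2 a b c d) = mat2 a c b d"
  by (rule m2_eqI) (simp_all add: mat2_nth transpose_def)
lemma mat2_scaleR: "k *\<^sub>R mat2 a b c d = mat2 (k*a) (k*b) (k*c) (k*d)"
  by (rule m2_eqI) (simp_all add: mat2_nth)
lemma mat2_one: "mat 1 = mat2 1 0 0 1"
  by (rule m2_eqI) (simp_all add: mat2_nth mat_def)
lemma mat2_zero: "0 = mat2 0 0 0 0"
  by (rule m2_eqI) (simp_all add: mat2_nth)

lemma O2_left: "P \<in> O2 \<Longrightarrow> transpose P ** P = mat 1"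
  by (rule matrix_left_right_inverse1) (simp add: O2_def)
lemma O2_right: "P \<in> O2 \<Longrightarrow> P ** transpose P = mat 1"
  unfolding O2_def by blast
lemma O2_inv: assumes "P \<in> O2" shows "matrix_inv P = transpose P"
proof -
  have ex: "P ** transpose P = mat 1 \<and> transpose P ** P = mat 1" using O2_left O2_right assms by blast
  show ?thesis unfolding matrix_inv_def
  proof (rule some_equality)
    fix A assume A: "P ** A = mat 1 \<and> A ** P = mat 1"
    have "A = (transpose P ** P) ** A" using ex by (simp only: matrix_mul_lid)
    also have "\<dots> = transpose P ** (P ** A)" by (simp only: matrix_mul_assoc)
    also have "\<dots> = transpose P" using A by (simp only: matrix_mul_rid)
    finally show "A = transpose P" .
  qed (use ex in blast)
qed
lemma O2_one: "mat 1 \<in> O2" by (simp add: O2_def transpose_mat)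
lemma O2_transpose: "P \<in> O2 \<Longrightarrow> transpose P \<in> O2"
  using O2_left unfolding O2_def by (simp add: transpose_transpose)
lemma O2_mult: assumes "P \<in> O2" "Q \<in> O2" shows "P ** Q \<in> O2"
proof -
  have "P ** Q ** transpose (P ** Q) = P ** (Q ** transpose Q) ** transpose P"
    by (simp only: matrix_transpose_mul matrix_mul_assoc)
  also have "\<dots> = mat 1" using assms O2_right by (simp only: matrix_mul_rid)
  finally show ?thesis unfolding O2_def by simp
qed

definition rel :: "m2 \<Rightarrow> m2 \<Rightarrow> bool" where
  "rel X Y \<longleftrightarrow> (\<exists>c P. c \<noteq> 0 \<and> P \<in> O2 \<and> Y = c *\<^sub>R (P ** X ** transpose P))"

lemma rel_refl: "rel X X"
  unfolding rel_def by (rule exI[of _ 1], rule exI[of _ "mat 1"]) (simp add: O2_one transpose_mat)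

lemma rel_scale: "k \<noteq> 0 \<Longrightarrow> rel X (k *\<^sub>R X)"
  unfolding rel_def by (rule exI[of _ k], rule exI[of _ "mat 1"]) (simp add: O2_one transpose_mat)

lemma scal_l: "(k *\<^sub>R A) ** (B::m2) = k *\<^sub>R (A ** B)"
  by (simp add: scalar_matrix_assoc)
lemma scal_r: "(A::m2) ** (k *\<^sub>R B) = k *\<^sub>R (A ** B)"
  by (simp add: scalar_matrix_assoc matrix_scalar_ac)

lemma rel_sym: assumes "rel X Y" shows "rel Y X"
proof -
  obtain c P where cP: "c \<noteq> 0" "P \<in> O2" "Y = c *\<^sub>R (P ** X ** transpose P)"
    using assms unfolding rel_def by blast
  have "transpose P ** Y ** transpose (transpose P) = transpose P ** (c *\<^sub>R (P ** X ** transpose P)) ** P"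
    using cP(3) by (simp only: transpose_transpose)
  also have "\<dots> = c *\<^sub>R (transpose P ** (P ** X ** transpose P) ** P)" by (simp only: scal_l scal_r)
  also have "\<dots> = c *\<^sub>R ((transpose P ** P) ** X ** (transpose P ** P))" by (simp only: matrix_mul_assoc)
  also have "\<dots> = c *\<^sub>R X" using O2_left[OF cP(2)] by (simp only: matrix_mul_lid matrix_mul_rid)
  finally have "(1/c) *\<^sub>R (transpose P ** Y ** transpose (transpose P)) = (1/c) *\<^sub>R (c *\<^sub>R X)" by (rule arg_cong)
  then have e: "X = (1/c) *\<^sub>R (transpose P ** Y ** transpose (transpose P))" using cP(1) by simp
  have "1/c \<noteq> 0" using cP(1) by simp
  then show ?thesis unfolding rel_def using O2_transpose[OF cP(2)] e by blast
qed

lemma rel_trans: assumes "rel X Y" "rel Y Z" shows "rel X Z"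
proof -
  obtain c P where cP: "c \<noteq> 0" "P \<in> O2" "Y = c *\<^sub>R (P ** X ** transpose P)"
    using assms unfolding rel_def by blast
  obtain d Q where dQ: "d \<noteq> 0" "Q \<in> O2" "Z = d *\<^sub>R (Q ** Y ** transpose Q)"
    using assms unfolding rel_def by blast
  have "Z = d *\<^sub>R (Q ** (c *\<^sub>R (P ** X ** transpose P)) ** transpose Q)" using cP(3) dQ(3) by (simp only:)
  also have "\<dots> = (d*c) *\<^sub>R (Q ** (P ** X ** transpose P) ** transpose Q)" by (simp only: scal_l scal_r scaleR_scaleR)
  also have "\<dots> = (d*c) *\<^sub>R ((Q ** P) ** X ** (transpose P ** transpose Q))" by (simp only: matrix_mul_assoc)
  also have "\<dots> = (d*c) *\<^sub>R ((Q ** P) ** X ** transpose (Q ** P))" by (simp only: matrix_transpose_mul)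
  finally have "Z = (d*c) *\<^sub>R ((Q ** P) ** X ** transpose (Q ** P))" .
  moreover have "d*c \<noteq> 0" using cP(1) dQ(1) by simp
  ultimately show ?thesis unfolding rel_def using O2_mult[OF dQ(2) cP(2)] by blast
qed

lemma mult_zero_m2: "(A::m2) ** 0 = 0" "(0::m2) ** A = 0"
  by (simp_all add: matrix_matrix_mult_def vec_eq_iff)

lemma cone_gen_rel: "cone_gen X = {Y. rel X Y}"
proof (cases "X = 0")
  case True
  have "rel 0 Y \<longleftrightarrow> Y = 0" for Y
  proof
    assume "Y = 0"
    have "(0::m2) = (1::real) *\<^sub>R (mat 1 ** 0 ** transpose (mat 1))" by (simp only: mult_zero_m2 scaleR_zero_right)
    then show "rel 0 Y" unfolding rel_def using O2_one \<open>Y = 0\<close> one_neq_zero by blast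
  next
    assume "rel 0 Y" then show "Y = 0" unfolding rel_def by (auto simp only: mult_zero_m2 scaleR_zero_right)
  qed
  then show ?thesis unfolding cone_gen_def using True by simp
next
  case False
  have "(\<exists>c P. Y = c *\<^sub>R (P ** X ** matrix_inv P) \<and> c \<noteq> 0 \<and> P \<in> O2) \<longleftrightarrow> rel X Y" for Y
    unfolding rel_def by (metis O2_inv)
  then show ?thesis unfolding cone_gen_def using False by (simp add: setcompr_eq_image)
qed

definition S :: "real \<Rightarrow> real \<Rightarrow> real \<Rightarrow> m2" where
  "S a b r = mat2 (a+r) b (-b) (a-r)"

lemma O2_mat2: "mat2 x y z w \<in> O2 \<longleftrightarrow> x*x+y*y = 1 \<and> x*z+y*w = 0 \<and> z*x+w*y = 0 \<and> z*z+w*w = 1"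
  unfolding O2_def by (simp add: mat2_transpose mat2_mult mat2_one mat2_eq_iff)

lemma rel_flipb: "rel (S a b r) (S a (-b) r)"
proof -
  have "S a (-b) r = (1::real) *\<^sub>R (mat2 1 0 0 (-1) ** S a b r ** transpose (mat2 1 0 0 (-1)))"
    unfolding S_def by (simp add: mat2_transpose mat2_mult mat2_scaleR mat2_eq_iff)
  moreover have "mat2 1 0 0 (-1) \<in> O2" by (simp add: O2_mat2)
  ultimately show ?thesis unfolding rel_def using one_neq_zero by blast
qed

lemma rel_flipa: "rel (S a b r) (S (-a) b r)"
proof -
  have "S (-a) b r = (-1::real) *\<^sub>R (mat2 0 (-1) (-1) 0 ** S a b r ** transpose (mat2 0 (-1) (-1) 0))"
    unfolding S_def by (simp add: mat2_transpose mat2_mult mat2_scaleR mat2_eq_iff)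
  moreover have "mat2 0 (-1) (-1) 0 \<in> O2" by (simp add: O2_mat2)
  moreover have "(-1::real) \<noteq> 0" by simp
  ultimately show ?thesis unfolding rel_def by blast
qed

lemma rel_scaleS: "k \<noteq> 0 \<Longrightarrow> rel (S a b r) (S (k*a) (k*b) (k*r))"
proof -
  assume k: "k \<noteq> 0"
  have "S (k*a) (k*b) (k*r) = k *\<^sub>R S a b r"
    unfolding S_def by (simp add: mat2_scaleR mat2_eq_iff algebra_simps)
  then show ?thesis using rel_scale[OF k] by simp
qed

lemma canon: "\<exists>a b r. r \<ge> 0 \<and> rel X (S a b r)"
proof -
  define x11 x12 x21 x22 where "x11 = X$1$1" "x12 = X$1$2" "x21 = X$2$1" "x22 = X$2$2"
  have X: "X = mat2 x11 x12 x21 x22" unfolding x11_x12_x21_x22_def by (rule mat2_expand)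
  define a b p q where "a = (x11+x22)/2" "b = (x12-x21)/2" "p = (x11-x22)/2" "q = (x12+x21)/2"
  define r where "r = sqrt (p^2+q^2)"
  have r0: "r \<ge> 0" unfolding r_def by simp
  have r2: "r^2 = p^2+q^2" unfolding r_def by simp
  show ?thesis
  proof (cases "r = 0")
    case True
    then have "p = 0" "q = 0" using r2 by (auto simp: power2_eq_square)
    then have "X = S a b 0" unfolding X S_def a_b_p_q_def by (simp add: mat2_eq_iff field_simps)
    then show ?thesis using rel_refl by blast
  next
    case False
    have "(p/r)^2 + (-q/r)^2 = (p^2+q^2)/r^2" by (simp add: power_divide add_divide_distrib)
    also have "\<dots> = 1" using False by (simp add: r2[symmetric])
    finally have "(p/r)^2 + (-q/r)^2 = 1" .
    then obtain t where t: "p/r = cos t" "-q/r = sin t" by (rule sincos_total_2pi) blast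
    define co si where "co = cos (t/2)" "si = sin (t/2)"
    have cs1: "co*co + si * si = 1" unfolding co_si_def by (simp flip: power2_eq_square)
    have ct: "cos t = co*co - si * si" unfolding co_si_def using cos_double[of "t/2"] by (simp add: power2_eq_square)
    have st: "sin t = 2*co * si" unfolding co_si_def using sin_double[of "t/2"] by (simp add: mult_ac)
    have cs2: "co*co - si * si = p/r" using t ct by simp
    have cs3: "2*co * si = -q/r" using t st by simp
    have e2: "r*(co*co - si * si) = p" using cs2 False by simp
    have e3: "r*(2*co * si) = -q" using cs3 False by simp
    have X': "X = mat2 (a+p) (b+q) (q-b) (a-p)" unfolding X a_b_p_q_def by (simp add: mat2_eq_iff field_simps)
    have PO: "mat2 co (-si) si co \<in> O2" using cs1 by (simp add: O2_mat2)
    have pr: "(co*co - si * si)*p - (2*co * si)*q = r"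
    proof -
      have "r * ((co*co - si * si)*p - (2*co * si)*q) = (r*(co*co - si * si))*p - (r*(2*co * si))*q"
        by (simp add: algebra_simps)
      also have "\<dots> = p*p + q*q" using e2 e3 by simp
      also have "\<dots> = r*r" using r2 by (simp add: power2_eq_square)
      finally have "r * ((co*co - si * si)*p - (2*co * si)*q) = r * r" .
      then show ?thesis using False by simp
    qed
    have qr: "(2*co * si)*p + (co*co - si * si)*q = 0"
    proof -
      have "r * ((2*co * si)*p + (co*co - si * si)*q) = (r*(2*co * si))*p + (r*(co*co - si * si))*q"
        by (simp add: algebra_simps)
      also have "\<dots> = 0" using e2 e3 by simp
      finally have "r * ((2*co * si)*p + (co*co - si * si)*q) = 0" .
      then show ?thesis using False by simp
    qed
    have "S a b r = 1 *\<^sub>R (mat2 co (-si) si co ** X ** transpose (mat2 co (-si) si co))"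
      unfolding X' S_def
      apply (simp add: mat2_transpose mat2_mult mat2_scaleR mat2_eq_iff)
      using cs1 pr qr
      apply algebra
      done
    then show ?thesis unfolding rel_def using PO r0 one_neq_zero by blast
  qed
qed

lemma rel_inv:
  assumes "rel (S a b r) (S a' b' r')"
  shows "\<exists>c. c \<noteq> 0 \<and> a' = c*a \<and> b'^2 = c^2*b^2 \<and> r'^2 = c^2*r^2"
proof -
  obtain c P where cP: "c \<noteq> 0" "P \<in> O2" "S a' b' r' = c *\<^sub>R (P ** S a b r ** transpose P)"
    using assms unfolding rel_def by blast
  define x y z w where "x = P$1$1" "y = P$1$2" "z = P$2$1" "w = P$2$2"
  have P: "P = mat2 x y z w" unfolding x_y_z_w_def by (rule mat2_expand)
  have o1: "x*x+y*y = 1 \<and> x*z+y*w = 0 \<and> z*x+w*y = 0 \<and> z*z+w*w = 1"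
    using cP(2) unfolding P O2_mat2 .
  have o2: "x*x+z*z = 1 \<and> x*y+z*w = 0 \<and> y*x+w*z = 0 \<and> y*y+w*w = 1"
    using O2_transpose[OF cP(2)] unfolding P mat2_transpose O2_mat2 .
  have "mat2 (a'+r') b' (-b') (a'-r') = c *\<^sub>R (mat2 x y z w ** mat2 (a+r) b (-b) (a-r) ** mat2 x z y w)"
    using cP(3) unfolding P S_def mat2_transpose .
  then have e: "a'+r' = c*((x*(a+r)+y*(-b))*x+(x*b+y*(a-r))*y) \<and> b' = c*((x*(a+r)+y*(-b))*z+(x*b+y*(a-r))*w) \<and>
     -b' = c*((z*(a+r)+w*(-b))*x+(z*b+w*(a-r))*y) \<and> a'-r' = c*((z*(a+r)+w*(-b))*z+(z*b+w*(a-r))*w)"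
    unfolding mat2_mult mat2_scaleR mat2_eq_iff .
  have i1: "a' = c*a" using o1 o2 e by algebra
  have i2: "a'^2 - r'^2 + b'^2 = c^2*(a^2 - r^2 + b^2)" using o1 o2 e by algebra
  have i3: "a'^2 + r'^2 + b'^2 = c^2*(a^2 + r^2 + b^2)" using o1 o2 e by algebra
  have "b'^2 = c^2*b^2" using i1 i2 i3 by algebra
  moreover have "r'^2 = c^2*r^2" using i1 i2 i3 by algebra
  ultimately show ?thesis using cP(1) i1 by blast
qed

definition nfp :: "real \<Rightarrow> real \<Rightarrow> real \<Rightarrow> bool" where
  "nfp a b r \<longleftrightarrow> (a = 0 \<and> b = 0 \<and> r = 0) \<or> (a = 1 \<and> b = 0 \<and> r = 0) \<or> (b = 0 \<and> r = 1 \<and> a \<ge> 0)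
     \<or> (b = 1 \<and> a \<ge> 0 \<and> r \<ge> 0)"

lemma S_inj: "S a b r = S a' b' r' \<Longrightarrow> a = a' \<and> b = b' \<and> r = r'"
  unfolding S_def mat2_eq_iff by linarith

lemma nf1: "M \<in> normal_forms \<Longrightarrow> \<exists>a b r. nfp a b r \<and> M = S a b r"
  unfolding normal_forms_def
proof (elim UnE insertE)
  assume "M = mat2 0 0 0 0" then show ?thesis unfolding nfp_def S_def by (intro exI[of _ 0]) simp
next
  assume "M = mat2 1 0 0 1" then show ?thesis unfolding nfp_def S_def by (intro exI[of _ 1] exI[of _ 0]) simp
next
  assume "M = mat2 0 1 (-1) 0" then show ?thesis unfolding nfp_def S_def by (intro exI[of _ 0] exI[of _ 1]) simp
next
  assume "M = mat2 1 0 0 (-1)" then show ?thesis unfolding nfp_def S_def by (intro exI[of _ 0] exI[of _ 0] exI[of _ 1]) simp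
next
  assume "M \<in> {}" then show ?thesis by simp
next
  assume "M \<in> {mat2 (a + 1) 0 0 (a - 1) |a. 0 < a}"
  then obtain a where "M = mat2 (a + 1) 0 0 (a - 1)" "a > 0" by blast
  then show ?thesis unfolding nfp_def S_def by (intro exI[of _ a] exI[of _ 0] exI[of _ 1]) simp
next
  assume "M \<in> {mat2 (a + s) 1 (- 1) (a - s) |a s. 0 \<le> a \<and> 0 \<le> s \<and> (a, s) \<noteq> (0, 0)}"
  then obtain a s where "M = mat2 (a + s) 1 (-1) (a - s)" "a \<ge> 0" "s \<ge> 0" by blast
  then show ?thesis unfolding nfp_def S_def by (intro exI[of _ a] exI[of _ 1] exI[of _ s]) simp
qed

lemma nf2: assumes "nfp a b r" shows "S a b r \<in> normal_forms"
  using assms unfolding nfp_def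
proof (elim disjE conjE)
  assume "a = 0" "b = 0" "r = 0" then show ?thesis unfolding normal_forms_def S_def by simp
next
  assume "a = 1" "b = 0" "r = 0" then show ?thesis unfolding normal_forms_def S_def by simp
next
  assume h: "b = 0" "r = 1" "a \<ge> 0"
  show ?thesis
  proof (cases "a = 0")
    case True then show ?thesis using h unfolding normal_forms_def S_def by simp
  next
    case False then have "a > 0" using h by simp
    then have "S a b r \<in> {mat2 (a + 1) 0 0 (a - 1) |a. 0 < a}" using h unfolding S_def by auto
    then show ?thesis unfolding normal_forms_def by blast
  qed
next
  assume h: "b = 1" "a \<ge> 0" "r \<ge> 0"
  show ?thesis
  proof (cases "a = 0 \<and> r = 0")
    case True then show ?thesis using h unfolding normal_forms_def S_def by simp
  next
    case False
    then have "S a b r \<in> {mat2 (a + s) 1 (- 1) (a - s) |a s. 0 \<le> a \<and> 0 \<le> s \<and> (a, s) \<noteq> (0, 0)}"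
      using h unfolding S_def by auto
    then show ?thesis unfolding normal_forms_def by blast
  qed
qed

lemma nf_unique:
  assumes "nfp a b r" "nfp a' b' r'" "c \<noteq> 0" "a' = c*a" "b'^2 = c^2*b^2" "r'^2 = c^2*r^2"
  shows "a = a' \<and> b = b' \<and> r = r'"
proof -
  have A: "a'^2 = c^2*a^2" using assms(4) by (simp add: power_mult_distrib)
  have c2: "c^2 \<noteq> 0" using assms(3) by simp
  have sq: "a' = a" if "c^2 = 1" "a \<ge> 0" "a' \<ge> 0"
    using A that power2_eq_iff_nonneg by auto
  show ?thesis
  using assms(1,2) unfolding nfp_def
  proof (elim disjE conjE)
  qed (use assms(4-6) c2 sq in \<open>auto simp: power2_eq_iff_nonneg\<close>)
qed

lemma rel_scaleS': "k \<noteq> 0 \<Longrightarrow> S a' b' r' = S (k*a) (k*b) (k*r) \<Longrightarrow> rel (S a b r) (S a' b' r')"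
  using rel_scaleS by simp

lemma nf_reduce: assumes "r \<ge> 0" shows "\<exists>a' b' r'. nfp a' b' r' \<and> rel (S a b r) (S a' b' r')"
proof (cases "b = 0")
  case False
  define b0 where "b0 = \<bar>b\<bar>"
  have b0: "b0 > 0" using False b0_def by simp
  have R1: "rel (S a b r) (S a b0 r)"
    using rel_refl rel_flipb unfolding b0_def by (cases "b \<ge> 0") auto
  have R2: "rel (S a b0 r) (S (a/b0) 1 (r/b0))"
    by (rule rel_scaleS'[of "1/b0"]) (use b0 in simp_all)
  have r': "r/b0 \<ge> 0" using assms b0 by simp
  show ?thesis
  proof (cases "a/b0 \<ge> 0")
    case True
    then have "nfp (a/b0) 1 (r/b0)" using r' unfolding nfp_def by simp
    then show ?thesis using rel_trans[OF R1 R2] by blast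
  next
    case False
    then have "nfp (-(a/b0)) 1 (r/b0)" using r' unfolding nfp_def by simp
    then show ?thesis using rel_trans[OF rel_trans[OF R1 R2] rel_flipa] by blast
  qed
next
  case b: True
  show ?thesis
  proof (cases "r = 0")
    case False
    then have rp: "r > 0" using assms by simp
    have R2: "rel (S a b r) (S (a/r) 0 1)"
      by (rule rel_scaleS'[of "1/r"]) (use rp b in simp_all)
    show ?thesis
    proof (cases "a/r \<ge> 0")
      case True
      then have "nfp (a/r) 0 1" unfolding nfp_def by simp
      then show ?thesis using R2 by blast
    next
      case False
      then have "nfp (-(a/r)) 0 1" unfolding nfp_def by simp
      then show ?thesis using rel_trans[OF R2 rel_flipa] by blast
    qed
  next
    case r: True
    show ?thesis
    proof (cases "a = 0")
      case True
      then have "nfp a b r" using b r unfolding nfp_def by simp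
      then show ?thesis using rel_refl by blast
    next
      case False
      have R2: "rel (S a b r) (S 1 0 0)"
        by (rule rel_scaleS'[of "1/a"]) (use False b r in simp_all)
      moreover have "nfp 1 0 0" unfolding nfp_def by simp
      ultimately show ?thesis by blast
    qed
  qed
qed

lemma nf_exists: "\<exists>a b r. nfp a b r \<and> rel X (S a b r)"
proof -
  obtain a b r where "r \<ge> 0" "rel X (S a b r)" using canon by blast
  then show ?thesis using nf_reduce rel_trans by blast
qed

lemma cone_gen_eq: "rel X Y \<Longrightarrow> cone_gen X = cone_gen Y"
  unfolding cone_gen_rel using rel_sym rel_trans by blast

lemma rel_conj: "P \<in> O2 \<Longrightarrow> rel Y (P ** Y ** matrix_inv P)"
proof -
  assume P: "P \<in> O2"
  have "P ** Y ** matrix_inv P = (1::real) *\<^sub>R (P ** Y ** transpose P)" using O2_inv[OF P] by simp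
  then show ?thesis unfolding rel_def using P one_neq_zero by blast
qed

lemma cone_gen_inv: "O2_invariant_cone (cone_gen X)"
  unfolding O2_invariant_cone_def is_cone_def cone_gen_rel
  using rel_refl rel_trans rel_scale rel_conj by blast

theorem mainTheorem10:
  assumes "irreducible_O2_cone C"
  shows "\<exists>!M. M \<in> normal_forms \<and> cone_gen M = C"
proof -
  have IC: "O2_invariant_cone C" and min: "\<not> (\<exists>D. O2_invariant_cone D \<and> D \<subset> C)"
    using assms unfolding irreducible_O2_cone_def by auto
  obtain X where X: "X \<in> C" using IC unfolding O2_invariant_cone_def is_cone_def by blast
  have sub: "cone_gen X \<subseteq> C"
  proof
    fix Y assume "Y \<in> cone_gen X"
    then obtain c P where cP: "c \<noteq> 0" "P \<in> O2" "Y = c *\<^sub>R (P ** X ** transpose P)"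
      unfolding cone_gen_rel rel_def by blast
    have "P ** X ** matrix_inv P \<in> C" using IC X cP(2) unfolding O2_invariant_cone_def by blast
    then have "c *\<^sub>R (P ** X ** matrix_inv P) \<in> C" using IC cP(1) unfolding O2_invariant_cone_def is_cone_def by blast
    then show "Y \<in> C" using cP O2_inv by simp
  qed
  have CX: "cone_gen X = C" using sub min cone_gen_inv by blast
  obtain a b r where abr: "nfp a b r" "rel X (S a b r)" using nf_exists by blast
  show ?thesis
  proof (rule ex1I[of _ "S a b r"])
    show "S a b r \<in> normal_forms \<and> cone_gen (S a b r) = C"
      using nf2[OF abr(1)] cone_gen_eq[OF abr(2)] CX by simp
  next
    fix M assume M: "M \<in> normal_forms \<and> cone_gen M = C"
    obtain a' b' r' where M': "nfp a' b' r'" "M = S a' b' r'" using nf1 M by blast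
    have "M \<in> cone_gen M" unfolding cone_gen_rel using rel_refl by blast
    then have "M \<in> cone_gen (S a b r)" using M CX cone_gen_eq[OF abr(2)] by simp
    then have "rel (S a b r) (S a' b' r')" unfolding cone_gen_rel using M' by simp
    then obtain c where "c \<noteq> 0" "a' = c*a" "b'^2 = c^2*b^2" "r'^2 = c^2*r^2" using rel_inv by blast
    then have "a = a' \<and> b = b' \<and> r = r'" using nf_unique abr(1) M'(1) by blast
    then show "M = S a b r" using M' by simp
  qed
qed
end
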